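(* Let $A$ be a Frobenius algebra over a field $\mathbb{k}$. Then $\dim_{\mathbb{k}}A=\operatorname{Frobdim}A$.
   Context: A Frobenius algebra over a field $\mathbb{k}$ is a finite-dimensional associative unital $\mathbb{k}$-algebra $A$ with a nondegenerate bilinear form $B:A\times A\to\mathbb{k}$ with $B(ab,c)=B(a,bc)$. The Frobenius space $\mathcal{E}_A$ is the $\mathbb{k}$-vector space of all $\mathbb{k}$-linear maps $\Delta:A\to A\otimes_{\mathbb{k}}A$ that are $A$-bimodule homomorphisms (with $a(x\otimes y)b=ax\otimes yb$), and $\operatorname{Frobdim}A=\dim_{\mathbb{k}}\mathcal{E}_A$. *)

theory Defs
  imports Main "HOL.Vector_Spaces" "HOL-Library.Function_Algebras"
begin

text \<open>A finite-dimensional k-vector space with a chosen basis indexed by the finite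
type 'n is represented as the coordinate space 'n => 'k.  The tensor product A (x)_k A of coordinate
spaces is represented as the coordinate space ('n * 'n) => 'k, with pure tensors
x (x) y given by (i,j) |-> x_i * y_j.\<close>

definition scalev :: "'k::field \<Rightarrow> ('n \<Rightarrow> 'k) \<Rightarrow> ('n \<Rightarrow> 'k)" where
  "scalev c x = (\<lambda>i. c * x i)"

definition unitv :: "'n \<Rightarrow> ('n \<Rightarrow> 'k::field)" where
  "unitv p = (\<lambda>i. if i = p then 1 else 0)"

definition tensor :: "('n \<Rightarrow> 'k::field) \<Rightarrow> ('n \<Rightarrow> 'k) \<Rightarrow> ('n \<times> 'n \<Rightarrow> 'k)" where
  "tensor x y = (\<lambda>(i, j). x i * y j)"

definition frobenius_algebra ::
  "(('n::finite \<Rightarrow> 'k::field) \<Rightarrow> ('n \<Rightarrow> 'k) \<Rightarrow> ('n \<Rightarrow> 'k)) \<Rightarrow>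
   (('n \<Rightarrow> 'k) \<Rightarrow> ('n \<Rightarrow> 'k) \<Rightarrow> 'k) \<Rightarrow> bool" where
  "frobenius_algebra mul B \<longleftrightarrow>
     \<comment> \<open>k-bilinear multiplication\<close>
     (\<forall>x y z. mul (x + y) z = mul x z + mul y z) \<and>
     (\<forall>x y z. mul x (y + z) = mul x y + mul x z) \<and>
     (\<forall>c x y. mul (scalev c x) y = scalev c (mul x y)) \<and>
     (\<forall>c x y. mul x (scalev c y) = scalev c (mul x y)) \<and>
     \<comment> \<open>associative and unital\<close>
     (\<forall>x y z. mul (mul x y) z = mul x (mul y z)) \<and>
     (\<exists>u. \<forall>x. mul u x = x \<and> mul x u = x) \<and>
     \<comment> \<open>B bilinear\<close>
     (\<forall>x y z. B (x + y) z = B x z + B y z) \<and>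
     (\<forall>x y z. B x (y + z) = B x y + B x z) \<and>
     (\<forall>c x y. B (scalev c x) y = c * B x y) \<and>
     (\<forall>c x y. B x (scalev c y) = c * B x y) \<and>
     \<comment> \<open>nondegenerate\<close>
     (\<forall>x. (\<forall>y. B x y = 0) \<longrightarrow> x = 0) \<and>
     (\<forall>y. (\<forall>x. B x y = 0) \<longrightarrow> y = 0) \<and>
     \<comment> \<open>associative (invariant)\<close>
     (\<forall>a b c. B (mul a b) c = B a (mul b c))"

text \<open>Left and right actions of A on A (x) A, extended linearly from
a (x (x) y) = (a x) (x) y and (x (x) y) b = x (x) (y b).\<close>
definition lact :: "(('n::finite \<Rightarrow> 'k::field) \<Rightarrow> ('n \<Rightarrow> 'k) \<Rightarrow> ('n \<Rightarrow> 'k)) \<Rightarrow>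
    ('n \<Rightarrow> 'k) \<Rightarrow> ('n \<times> 'n \<Rightarrow> 'k) \<Rightarrow> ('n \<times> 'n \<Rightarrow> 'k)" where
  "lact mul a T = (\<Sum>p\<in>UNIV. \<Sum>q\<in>UNIV. (\<lambda>ij. T (p, q) * tensor (mul a (unitv p)) (unitv q) ij))"

definition ract :: "(('n::finite \<Rightarrow> 'k::field) \<Rightarrow> ('n \<Rightarrow> 'k) \<Rightarrow> ('n \<Rightarrow> 'k)) \<Rightarrow>
    ('n \<times> 'n \<Rightarrow> 'k) \<Rightarrow> ('n \<Rightarrow> 'k) \<Rightarrow> ('n \<times> 'n \<Rightarrow> 'k)" where
  "ract mul T b = (\<Sum>p\<in>UNIV. \<Sum>q\<in>UNIV. (\<lambda>ij. T (p, q) * tensor (unitv p) (mul (unitv q) b) ij))"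

definition scalet :: "'k::field \<Rightarrow> ('n \<times> 'n \<Rightarrow> 'k) \<Rightarrow> ('n \<times> 'n \<Rightarrow> 'k)" where
  "scalet c T = (\<lambda>ij. c * T ij)"

definition scalemap :: "'k::field \<Rightarrow> (('n \<Rightarrow> 'k) \<Rightarrow> ('n \<times> 'n \<Rightarrow> 'k)) \<Rightarrow>
    (('n \<Rightarrow> 'k) \<Rightarrow> ('n \<times> 'n \<Rightarrow> 'k))" where
  "scalemap c D = (\<lambda>x. scalet c (D x))"

definition frob_space :: "(('n::finite \<Rightarrow> 'k::field) \<Rightarrow> ('n \<Rightarrow> 'k) \<Rightarrow> ('n \<Rightarrow> 'k)) \<Rightarrow>
    (('n \<Rightarrow> 'k) \<Rightarrow> ('n \<times> 'n \<Rightarrow> 'k)) set" where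
  "frob_space mul = {D. (\<forall>x y. D (x + y) = D x + D y) \<and> (\<forall>c x. D (scalev c x) = scalet c (D x)) \<and>
      (\<forall>a x. D (mul a x) = lact mul a (D x)) \<and>
      (\<forall>x b. D (mul x b) = ract mul (D x) b)}"

definition frobdim :: "(('n::finite \<Rightarrow> 'k::field) \<Rightarrow> ('n \<Rightarrow> 'k) \<Rightarrow> ('n \<Rightarrow> 'k)) \<Rightarrow> nat" where
  "frobdim mul = vector_space.dim scalemap (frob_space mul)"

end

theory Submission
  imports Defs
begin
lemma sum_app: "(sum f S) x = sum (\<lambda>i. f i x) S"
proof (cases "finite S")
  case True then show ?thesis by (induction S rule: finite_induct) auto
qed simp

lemma add_sum:
  fixes f :: "'a::ab_group_add \<Rightarrow> 'b::ab_group_add"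
  assumes "\<And>x y. f (x + y) = f x + f y"
  shows "f (sum g S) = sum (\<lambda>i. f (g i)) S"
proof -
  have z: "f 0 = 0" using assms[of 0 0] by simp
  show ?thesis
  proof (cases "finite S")
    case True then show ?thesis by (induction S rule: finite_induct) (auto simp: z assms)
  qed (simp add: z)
qed

lemma expand_vec: "(x :: 'n::finite \<Rightarrow> 'k::field) = (\<Sum>q\<in>UNIV. scalev (x q) (unitv q))"
proof
  fix i
  have "(\<Sum>q\<in>UNIV. scalev (x q) (unitv q)) i = (\<Sum>q\<in>UNIV. x q * (if i = q then 1 else 0))"
    by (simp add: sum_app scalev_def unitv_def)
  also have "\<dots> = x i" by (simp add: if_distrib cong: if_cong)
  finally show "x i = (\<Sum>q\<in>UNIV. scalev (x q) (unitv q)) i" by simp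
qed

lemma lin_vec:
  fixes f :: "('n::finite \<Rightarrow> 'k::field) \<Rightarrow> ('m \<Rightarrow> 'k)"
  assumes "\<And>x y. f (x + y) = f x + f y" "\<And>c x. f (scalev c x) = scalev c (f x)"
  shows "f x i = (\<Sum>q\<in>UNIV. x q * f (unitv q) i)"
proof -
  have "f x = f (\<Sum>q\<in>UNIV. scalev (x q) (unitv q))" using expand_vec[of x] by simp
  also have "\<dots> = (\<Sum>q\<in>UNIV. scalev (x q) (f (unitv q)))" by (simp add: add_sum assms)
  finally show ?thesis by (simp add: sum_app scalev_def)
qed

lemma lin_scal:
  fixes f :: "('n::finite \<Rightarrow> 'k::field) \<Rightarrow> 'k"
  assumes "\<And>x y. f (x + y) = f x + f y" "\<And>c x. f (scalev c x) = c * f x"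
  shows "f x = (\<Sum>q\<in>UNIV. x q * f (unitv q))"
proof -
  have "f x = f (\<Sum>q\<in>UNIV. scalev (x q) (unitv q))" using expand_vec[of x] by simp
  also have "\<dots> = (\<Sum>q\<in>UNIV. x q * f (unitv q))" by (simp add: add_sum assms)
  finally show ?thesis .
qed

definition lmap :: "(('n \<Rightarrow> 'k) \<Rightarrow> ('n \<Rightarrow> 'k)) \<Rightarrow> ('n \<times> 'n \<Rightarrow> 'k) \<Rightarrow> ('n \<times> 'n \<Rightarrow> 'k)" where
  "lmap f T = (\<lambda>(i,j). f (\<lambda>p. T (p,j)) i)"
definition rmap :: "(('n \<Rightarrow> 'k) \<Rightarrow> ('n \<Rightarrow> 'k)) \<Rightarrow> ('n \<times> 'n \<Rightarrow> 'k) \<Rightarrow> ('n \<times> 'n \<Rightarrow> 'k)" where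
  "rmap f T = (\<lambda>(i,j). f (\<lambda>q. T (i,q)) j)"

lemma lmap_tensor:
  fixes f :: "('n::finite \<Rightarrow> 'k::field) \<Rightarrow> ('n \<Rightarrow> 'k)"
  assumes "\<And>c x. f (scalev c x) = scalev c (f x)"
  shows "lmap f (tensor y w) = tensor (f y) w"
proof (rule ext, clarify)
  fix i j
  have "(\<lambda>p. y p * w j) = scalev (w j) y" by (auto simp: scalev_def)
  then have "lmap f (tensor y w) (i,j) = scalev (w j) (f y) i" by (simp add: lmap_def tensor_def assms)
  then show "lmap f (tensor y w) (i,j) = tensor (f y) w (i,j)" by (simp add: scalev_def tensor_def)
qed

lemma rmap_tensor:
  fixes f :: "('n::finite \<Rightarrow> 'k::field) \<Rightarrow> ('n \<Rightarrow> 'k)"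
  assumes "\<And>c x. f (scalev c x) = scalev c (f x)"
  shows "rmap f (tensor y w) = tensor y (f w)"
proof (rule ext, clarify)
  fix i j
  have "(\<lambda>q. y i * w q) = scalev (y i) w" by (auto simp: scalev_def)
  then have "rmap f (tensor y w) (i,j) = scalev (y i) (f w) j" by (simp add: rmap_def tensor_def assms)
  then show "rmap f (tensor y w) (i,j) = tensor y (f w) (i,j)" by (simp add: scalev_def tensor_def)
qed

lemma lmap_sum:
  fixes f :: "('n::finite \<Rightarrow> 'k::field) \<Rightarrow> ('n \<Rightarrow> 'k)"
  assumes "\<And>x y. f (x + y) = f x + f y"
  shows "lmap f (sum T S) = (\<Sum>r\<in>S. lmap f (T r))"
proof -
  have "\<And>j. (\<lambda>p. sum T S (p,j)) = (\<Sum>r\<in>S. (\<lambda>p. T r (p,j)))" by (auto simp: sum_app)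
  then show ?thesis by (auto simp: lmap_def sum_app add_sum[of f, OF assms])
qed

lemma rmap_sum:
  fixes f :: "('n::finite \<Rightarrow> 'k::field) \<Rightarrow> ('n \<Rightarrow> 'k)"
  assumes "\<And>x y. f (x + y) = f x + f y"
  shows "rmap f (sum T S) = (\<Sum>r\<in>S. rmap f (T r))"
proof -
  have "\<And>i. (\<lambda>q. sum T S (i,q)) = (\<Sum>r\<in>S. (\<lambda>q. T r (i,q)))" by (auto simp: sum_app)
  then show ?thesis by (auto simp: rmap_def sum_app add_sum[of f, OF assms])
qed

lemma tensor_add1: "tensor (x + y) w = tensor x w + tensor y w"
  by (auto simp: tensor_def algebra_simps)
lemma tensor_scal1: "tensor (scalev c x) w = scalet c (tensor x w)"
  by (auto simp: tensor_def scalev_def scalet_def)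
lemma scalet_sum: "scalet c (sum T S) = (\<Sum>r\<in>S. scalet c (T r))"
proof -
  have "\<And>x y. scalet c (x + y) = scalet c x + scalet c y" by (auto simp: scalet_def algebra_simps)
  from add_sum[where f="scalet c", OF this] show ?thesis .
qed

lemma inj_unitv: "inj (unitv :: 'n \<Rightarrow> 'n \<Rightarrow> 'k::field)"
proof (rule injI)
  fix p q :: 'n assume "(unitv p :: 'n \<Rightarrow> 'k) = unitv q"
  then have "(unitv p :: 'n \<Rightarrow> 'k) p = unitv q p" by simp
  then show "p = q" by (simp add: unitv_def split: if_splits)
qed

lemma vs_scalev: "vector_space (scalev :: 'k::field \<Rightarrow> ('n \<Rightarrow> 'k) \<Rightarrow> ('n \<Rightarrow> 'k))"
  by unfold_locales (auto simp: scalev_def algebra_simps)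

lemma fdv: "finite_dimensional_vector_space (scalev :: 'k::field \<Rightarrow> ('n::finite \<Rightarrow> 'k) \<Rightarrow> ('n \<Rightarrow> 'k)) (range unitv)"
proof -
  interpret V: vector_space "scalev :: 'k::field \<Rightarrow> ('n::finite \<Rightarrow> 'k) \<Rightarrow> ('n \<Rightarrow> 'k)" by (rule vs_scalev)
  have sr: "(\<Sum>v\<in>range unitv. g v) = (\<Sum>q\<in>UNIV. g (unitv q :: 'n \<Rightarrow> 'k))" for g :: "('n \<Rightarrow> 'k) \<Rightarrow> ('n \<Rightarrow> 'k)"
    by (simp add: sum.reindex inj_unitv)
  show ?thesis
  proof
    show "finite (range (unitv :: 'n \<Rightarrow> 'n \<Rightarrow> 'k))" by simp
    show "\<not> V.dependent (range (unitv :: 'n \<Rightarrow> 'n \<Rightarrow> 'k))"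
    proof
      assume "V.dependent (range (unitv :: 'n \<Rightarrow> 'n \<Rightarrow> 'k))"
      then obtain c where c: "\<exists>v\<in>range unitv. c v \<noteq> 0" "(\<Sum>v\<in>range unitv. scalev (c v) v) = (0 :: 'n \<Rightarrow> 'k)"
        by (auto simp: V.dependent_finite)
      then obtain i where ci: "c (unitv i) \<noteq> 0" by auto
      have "0 = (\<Sum>v\<in>range unitv. scalev (c v) v) i" using c(2) by simp
      also have "\<dots> = (\<Sum>q\<in>UNIV. scalev (c (unitv q)) (unitv q :: 'n \<Rightarrow> 'k)) i" by (simp add: sr)
      also have "\<dots> = (\<Sum>q\<in>UNIV. c (unitv q) * (if i = q then 1 else 0))" by (simp add: sum_app scalev_def unitv_def)
      also have "\<dots> = c (unitv i)" by (simp add: if_distrib cong: if_cong)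
      finally show False using ci by simp
    qed
    show "V.span (range (unitv :: 'n \<Rightarrow> 'n \<Rightarrow> 'k)) = UNIV"
    proof -
      have "x \<in> range (\<lambda>c. \<Sum>v\<in>range unitv. scalev (c v) v)" for x :: "'n \<Rightarrow> 'k"
      proof
        show "x = (\<Sum>v\<in>range unitv. scalev (x (inv unitv v)) v)"
          by (simp add: sr inj_unitv expand_vec[of x, symmetric])
      qed simp
      then show ?thesis by (auto simp: V.span_finite)
    qed
  qed
qed

locale frobA =
  fixes mul :: "('n::finite \<Rightarrow> 'k::field) \<Rightarrow> ('n \<Rightarrow> 'k) \<Rightarrow> ('n \<Rightarrow> 'k)"
    and B :: "('n \<Rightarrow> 'k) \<Rightarrow> ('n \<Rightarrow> 'k) \<Rightarrow> 'k"
  assumes fa: "frobenius_algebra mul B"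
begin

lemma madd1: "mul (x + y) z = mul x z + mul y z" using fa by (simp add: frobenius_algebra_def)
lemma madd2: "mul x (y + z) = mul x y + mul x z" using fa by (simp add: frobenius_algebra_def)
lemma mscal1: "mul (scalev c x) y = scalev c (mul x y)" using fa by (simp add: frobenius_algebra_def)
lemma mscal2: "mul x (scalev c y) = scalev c (mul x y)" using fa by (simp add: frobenius_algebra_def)
lemma massoc: "mul (mul x y) z = mul x (mul y z)" using fa by (simp add: frobenius_algebra_def)
lemma Badd1: "B (x + y) z = B x z + B y z" using fa by (simp add: frobenius_algebra_def)
lemma Badd2: "B x (y + z) = B x y + B x z" using fa by (simp add: frobenius_algebra_def)
lemma Bscal1: "B (scalev c x) y = c * B x y" using fa by (simp add: frobenius_algebra_def)
lemma Bscal2: "B x (scalev c y) = c * B x y" using fa by (simp add: frobenius_algebra_def)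
lemma nd1: "(\<And>y. B x y = 0) \<Longrightarrow> x = 0" using fa by (simp add: frobenius_algebra_def)
lemma Binv: "B (mul a b) c = B a (mul b c)" using fa by (simp add: frobenius_algebra_def)

definition u where "u = (SOME u. \<forall>x. mul u x = x \<and> mul x u = x)"
lemma unit: "mul u x = x" "mul x u = x"
proof -
  have "\<exists>u. \<forall>x. mul u x = x \<and> mul x u = x" using fa by (simp add: frobenius_algebra_def)
  then have "\<forall>x. mul u x = x \<and> mul x u = x" unfolding u_def by (rule someI_ex)
  then show "mul u x = x" "mul x u = x" by auto
qed

abbreviation e :: "'n \<Rightarrow> 'n \<Rightarrow> 'k" where "e \<equiv> unitv"

lemma mul_exp1: "mul x y i = (\<Sum>q\<in>UNIV. x q * mul (e q) y i)"
  by (rule lin_vec) (metis madd1, metis mscal1)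
lemma mul_exp2: "mul x y i = (\<Sum>q\<in>UNIV. y q * mul x (e q) i)"
  by (rule lin_vec) (metis madd2, metis mscal2)
lemma B_exp1: "B x y = (\<Sum>q\<in>UNIV. x q * B (e q) y)"
  by (rule lin_scal[where f="\<lambda>x. B x y"]) (auto simp: Badd1 Bscal1)
lemma B_exp2: "B x y = (\<Sum>q\<in>UNIV. y q * B x (e q))"
  by (rule lin_scal) (metis Badd2, metis Bscal2)

lemma B_sum1: "B (sum g S) z = (\<Sum>r\<in>S. B (g r) z)"
  by (rule add_sum[where f="\<lambda>x. B x z"]) (simp add: Badd1)

lemma Beq: assumes "\<And>z. B x z = B y z" shows "x = y"
proof -
  have "\<And>z. B (x - y) z = 0"
  proof -
    fix z have "B (x - y) z + B y z = B x z" using Badd1[of "x - y" y z] by simp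
    then show "B (x - y) z = 0" using assms by simp
  qed
  then have "x - y = 0" by (rule nd1)
  then show ?thesis by simp
qed

definition Bl :: "('n \<Rightarrow> 'k) \<Rightarrow> ('n \<Rightarrow> 'k)" where "Bl y = (\<lambda>r. B y (e r))"

lemma Bl_surj: "surj Bl"
proof -
  interpret V: finite_dimensional_vector_space "scalev :: 'k \<Rightarrow> ('n \<Rightarrow> 'k) \<Rightarrow> ('n \<Rightarrow> 'k)" "range unitv"
    by (rule fdv)
  have lin: "Vector_Spaces.linear scalev scalev Bl"
  proof (intro Vector_Spaces.linear_iff[THEN iffD2] conjI allI vs_scalev)
    fix x y show "Bl (x + y) = Bl x + Bl y" by (simp add: Bl_def Badd1 fun_eq_iff)
  next
    fix c x show "Bl (scalev c x) = scalev c (Bl x)" unfolding Bl_def Bscal1 by (simp add: scalev_def)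
  qed
  have "inj Bl"
  proof (rule injI)
    fix x y assume "Bl x = Bl y"
    then have "\<And>r. B x (e r) = B y (e r)" unfolding Bl_def by meson
    then have "\<And>z. B x z = B y z" by (subst B_exp2, subst (2) B_exp2) simp
    then show "x = y" by (rule Beq)
  qed
  then show ?thesis using V.linear_inj_imp_surj[OF lin] by simp
qed

definition d :: "'n \<Rightarrow> 'n \<Rightarrow> 'k" where "d r = inv Bl (e r)"

lemma dual: "B (d r) z = z r"
proof -
  have "Bl (d r) = e r" unfolding d_def using Bl_surj by (simp add: surj_f_inv_f)
  then have "\<And>s. B (d r) (e s) = e r s" unfolding Bl_def by (simp add: fun_eq_iff)
  then have "B (d r) z = (\<Sum>s\<in>UNIV. z s * e r s)" by (subst B_exp2) simp
  also have "\<dots> = z r" by (simp add: unitv_def if_distrib cong: if_cong)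
  finally show ?thesis .
qed

lemma E1: "y j = (\<Sum>r\<in>UNIV. B y (e r) * d r j)"
proof -
  have "y = (\<Sum>r\<in>UNIV. scalev (B y (e r)) (d r))"
  proof (rule Beq)
    fix z
    have "B (\<Sum>r\<in>UNIV. scalev (B y (e r)) (d r)) z = (\<Sum>r\<in>UNIV. B y (e r) * z r)"
      by (simp add: B_sum1 Bscal1 dual)
    also have "\<dots> = B y z" by (subst (2) B_exp2) (simp add: mult.commute)
    finally show "B y z = B (\<Sum>r\<in>UNIV. scalev (B y (e r)) (d r)) z" by simp
  qed
  then have "y j = (\<Sum>r\<in>UNIV. scalev (B y (e r)) (d r)) j" by simp
  then show ?thesis by (simp add: sum_app scalev_def)
qed

lemma lact_eq: "lact mul a T = lmap (mul a) T"
proof (rule ext, clarify)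
  fix i j
  have "lact mul a T (i,j) = (\<Sum>p\<in>UNIV. \<Sum>q\<in>UNIV. T (p,q) * (mul a (e p) i * (if j = q then 1 else 0)))"
    by (simp add: lact_def sum_app tensor_def unitv_def)
  also have "\<dots> = (\<Sum>p\<in>UNIV. T (p,j) * mul a (e p) i)"
    by (simp add: if_distrib cong: if_cong)
  also have "\<dots> = lmap (mul a) T (i,j)"
    by (simp add: lmap_def mul_exp2[of a "\<lambda>p. T (p,j)"])
  finally show "lact mul a T (i,j) = lmap (mul a) T (i,j)" .
qed

lemma ract_eq: "ract mul T b = rmap (\<lambda>w. mul w b) T"
proof (rule ext, clarify)
  fix i j
  have "ract mul T b (i,j) = (\<Sum>p\<in>UNIV. \<Sum>q\<in>UNIV. (if i = p then 1 else 0) * (T (p,q) * mul (e q) b j))"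
    by (simp add: ract_def sum_app tensor_def unitv_def mult_ac)
  also have "\<dots> = (\<Sum>p\<in>UNIV. if p = i then (\<Sum>q\<in>UNIV. T (p,q) * mul (e q) b j) else 0)"
    by (rule sum.cong) (auto simp: sum_distrib_left[symmetric])
  also have "\<dots> = (\<Sum>q\<in>UNIV. T (i,q) * mul (e q) b j)"
    by simp
  also have "\<dots> = rmap (\<lambda>w. mul w b) T (i,j)"
    by (simp add: rmap_def mul_exp1[of "\<lambda>q. T (i,q)" b])
  finally show "ract mul T b (i,j) = rmap (\<lambda>w. mul w b) T (i,j)" .
qed

lemma sum_tensor_app: "(\<Sum>r\<in>UNIV. tensor (y r) (w r)) (i,j) = (\<Sum>r\<in>UNIV. y r i * w r j)"
  by (simp add: sum_app tensor_def)

lemma keyK: "(\<Sum>r\<in>UNIV. tensor (mul b (e r)) (d r)) = (\<Sum>r\<in>UNIV. tensor (e r) (mul (d r) b))"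
proof (rule ext, clarify)
  fix i j
  have "(\<Sum>r\<in>UNIV. tensor (mul b (e r)) (d r)) (i,j) = (\<Sum>r\<in>UNIV. B (mul (d i) b) (e r) * d r j)"
    by (simp add: sum_tensor_app Binv dual)
  also have "\<dots> = mul (d i) b j" by (rule E1[symmetric])
  also have "\<dots> = (\<Sum>r\<in>UNIV. if r = i then mul (d r) b j else 0)"
    by simp
  also have "\<dots> = (\<Sum>r\<in>UNIV. e r i * mul (d r) b j)"
    by (rule sum.cong) (auto simp: unitv_def)
  finally show "(\<Sum>r\<in>UNIV. tensor (mul b (e r)) (d r)) (i,j) = (\<Sum>r\<in>UNIV. tensor (e r) (mul (d r) b)) (i,j)"
    by (simp add: sum_tensor_app)
qed

definition Dl :: "('n \<Rightarrow> 'k) \<Rightarrow> ('n \<Rightarrow> 'k) \<Rightarrow> ('n \<times> 'n \<Rightarrow> 'k)" where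
  "Dl c x = (\<Sum>r\<in>UNIV. tensor (mul (mul x (e r)) c) (d r))"

lemma lmap_mul: "lmap (mul a) (\<Sum>r\<in>UNIV. tensor (y r) (w r)) = (\<Sum>r\<in>UNIV. tensor (mul a (y r)) (w r))"
  by (simp add: lmap_sum[of "mul a"] madd2 lmap_tensor mscal2)

lemma lmap_f: "lmap (\<lambda>y. mul (mul x y) c) (\<Sum>r\<in>UNIV. tensor (y r) (w r)) = (\<Sum>r\<in>UNIV. tensor (mul (mul x (y r)) c) (w r))"
  by (simp add: lmap_sum[of "\<lambda>y. mul (mul x y) c"] madd2 madd1 lmap_tensor[of "\<lambda>y. mul (mul x y) c"] mscal2 mscal1)

lemma rmap_mul: "rmap (\<lambda>w. mul w b) (\<Sum>r\<in>UNIV. tensor (y r) (w r)) = (\<Sum>r\<in>UNIV. tensor (y r) (mul (w r) b))"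
  by (simp add: rmap_sum[of "\<lambda>w. mul w b"] madd1 rmap_tensor[of "\<lambda>w. mul w b"] mscal1)

lemma Dl_in: "Dl c \<in> frob_space mul"
  unfolding frob_space_def
proof (intro CollectI conjI allI)
  fix x y show "Dl c (x + y) = Dl c x + Dl c y"
    by (simp add: Dl_def madd1 tensor_add1 sum.distrib)
next
  fix k x show "Dl c (scalev k x) = scalet k (Dl c x)"
    by (simp add: Dl_def mscal1 tensor_scal1 scalet_sum)
next
  fix a x show "Dl c (mul a x) = lact mul a (Dl c x)"
    by (simp add: Dl_def lact_eq lmap_mul massoc)
next
  fix x b
  have "Dl c (mul x b) = (\<Sum>r\<in>UNIV. tensor (mul (mul x (mul b (e r))) c) (d r))"
    by (simp add: Dl_def massoc)
  also have "\<dots> = lmap (\<lambda>y. mul (mul x y) c) (\<Sum>r\<in>UNIV. tensor (mul b (e r)) (d r))"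
    by (simp only: lmap_f)
  also have "\<dots> = lmap (\<lambda>y. mul (mul x y) c) (\<Sum>r\<in>UNIV. tensor (e r) (mul (d r) b))"
    by (simp add: keyK)
  also have "\<dots> = ract mul (Dl c x) b"
    by (simp add: lmap_f ract_eq rmap_mul Dl_def)
  finally show "Dl c (mul x b) = ract mul (Dl c x) b" .
qed

lemma Dl_add: "Dl (c + c') = Dl c + Dl c'"
  by (rule ext) (simp add: Dl_def madd2 tensor_add1 sum.distrib)

lemma Dl_scal: "Dl (scalev k c) = scalemap k (Dl c)"
  by (rule ext) (simp add: Dl_def scalemap_def mscal2 tensor_scal1 scalet_sum)

definition kappa :: "('n \<times> 'n \<Rightarrow> 'k) \<Rightarrow> ('n \<Rightarrow> 'k)" where
  "kappa T = (\<lambda>i. B (\<lambda>q. T (i,q)) u)"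

lemma kappa_Dl: "kappa (Dl c u) = c"
proof
  fix i
  have "(\<lambda>q. Dl c u (i,q)) = (\<Sum>r\<in>UNIV. scalev (mul (e r) c i) (d r))"
    by (rule ext) (simp add: Dl_def unit sum_app scalev_def tensor_def)
  then have "kappa (Dl c u) i = (\<Sum>r\<in>UNIV. mul (e r) c i * u r)"
    by (simp add: kappa_def B_sum1 Bscal1 dual)
  also have "\<dots> = mul u c i" by (simp add: mul_exp1[of u c] mult.commute)
  finally show "kappa (Dl c u) i = c i" by (simp add: unit)
qed

lemma Dl_inj: "inj Dl"
  by (rule injI) (metis kappa_Dl)

lemma Dl_surj: assumes D: "D \<in> frob_space mul" shows "D = Dl (kappa (D u))"
proof -
  define t where "t = D u"
  define c where "c = kappa t"
  have Dl: "D (mul a x) = lact mul a (D x)" and Dr: "D (mul x b) = ract mul (D x) b" for a x b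
    using D by (auto simp: frob_space_def)
  have comm: "lmap (mul a) t = rmap (\<lambda>w. mul w a) t" for a
    using Dl[of a u] Dr[of u a] by (simp add: unit t_def lact_eq ract_eq)
  define F where "F z = (\<lambda>i. B (\<lambda>q. t (i,q)) z)" for z
  have Fmul: "F (mul a z) i = mul a (F z) i" for a z i
  proof -
    have "F (mul a z) i = B (mul (\<lambda>q. t (i,q)) a) z" by (simp add: F_def Binv)
    also have "\<dots> = B (\<lambda>q. rmap (\<lambda>w. mul w a) t (i,q)) z" by (simp add: rmap_def)
    also have "\<dots> = B (\<lambda>q. lmap (mul a) t (i,q)) z" by (simp add: comm)
    also have "\<dots> = (\<Sum>j\<in>UNIV. (\<Sum>q\<in>UNIV. t (q,j) * mul a (e q) i) * B (e j) z)"
    proof -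
      have m: "mul a (\<lambda>p. t (p,j)) i = (\<Sum>q\<in>UNIV. t (q,j) * mul a (e q) i)" for j
        by (rule mul_exp2)
      show ?thesis by (subst B_exp1) (simp add: lmap_def m)
    qed
    also have "\<dots> = (\<Sum>q\<in>UNIV. (\<Sum>j\<in>UNIV. t (q,j) * B (e j) z) * mul a (e q) i)"
    proof -
      have "(\<Sum>j\<in>UNIV. (\<Sum>q\<in>UNIV. t (q,j) * mul a (e q) i) * B (e j) z)
          = (\<Sum>j\<in>UNIV. \<Sum>q\<in>UNIV. t (q,j) * B (e j) z * mul a (e q) i)"
        by (simp only: sum_distrib_right) (simp only: mult_ac)
      also have "\<dots> = (\<Sum>q\<in>UNIV. \<Sum>j\<in>UNIV. t (q,j) * B (e j) z * mul a (e q) i)"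
        by (rule sum.swap)
      also have "\<dots> = (\<Sum>q\<in>UNIV. (\<Sum>j\<in>UNIV. t (q,j) * B (e j) z) * mul a (e q) i)"
        by (simp only: sum_distrib_right)
      finally show ?thesis .
    qed
    also have "\<dots> = mul a (F z) i"
    proof -
      have "mul a (F z) i = (\<Sum>q\<in>UNIV. F z q * mul a (e q) i)" by (rule mul_exp2)
      moreover have "F z q = (\<Sum>j\<in>UNIV. t (q,j) * B (e j) z)" for q
        unfolding F_def by (rule B_exp1)
      ultimately show ?thesis by simp
    qed
    finally show ?thesis .
  qed
  have tco: "t (i,j) = (\<Sum>r\<in>UNIV. mul (e r) c i * d r j)" for i j
  proof -
    have "B (\<lambda>q. t (i,q)) (e r) = mul (e r) c i" for r
    proof -
      have "B (\<lambda>q. t (i,q)) (e r) = F (mul (e r) u) i" by (simp add: F_def unit)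
      also have "\<dots> = mul (e r) c i" using Fmul[of "e r" u i] by (simp add: c_def kappa_def F_def)
      finally show ?thesis .
    qed
    then show ?thesis using E1[of "\<lambda>q. t (i,q)" j] by simp
  qed
  have teq: "t = (\<Sum>r\<in>UNIV. tensor (mul (e r) c) (d r))"
    by (rule ext, clarify) (simp add: tco sum_tensor_app)
  show ?thesis
  proof
    fix x
    have "D x = lact mul x t" using Dl[of x u] by (simp add: unit t_def)
    also have "\<dots> = Dl c x" by (simp add: lact_eq teq lmap_mul Dl_def massoc)
    finally show "D x = Dl (kappa (D u)) x" by (simp add: c_def t_def)
  qed
qed

lemma Dl_image: "range Dl = frob_space mul"
  using Dl_in Dl_surj by blast

end

theorem corollary9:
  fixes mul :: "('n::finite \<Rightarrow> 'k::field) \<Rightarrow> ('n \<Rightarrow> 'k) \<Rightarrow> ('n \<Rightarrow> 'k)"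
    and B :: "('n \<Rightarrow> 'k) \<Rightarrow> ('n \<Rightarrow> 'k) \<Rightarrow> 'k"
  assumes "frobenius_algebra mul B"
  shows "vector_space.dim (scalev :: 'k \<Rightarrow> ('n \<Rightarrow> 'k) \<Rightarrow> ('n \<Rightarrow> 'k)) UNIV = frobdim mul"
proof -
  interpret F: frobA mul B by unfold_locales (rule assms)
  have vs1: "finite_dimensional_vector_space (scalev :: 'k \<Rightarrow> ('n \<Rightarrow> 'k) \<Rightarrow> ('n \<Rightarrow> 'k)) (range unitv)"
    by (rule fdv)
  have vs2: "vector_space (scalemap :: 'k \<Rightarrow> (('n \<Rightarrow> 'k) \<Rightarrow> ('n \<times> 'n \<Rightarrow> 'k)) \<Rightarrow> (('n \<Rightarrow> 'k) \<Rightarrow> ('n \<times> 'n \<Rightarrow> 'k)))"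
    by unfold_locales (auto simp: scalemap_def scalet_def algebra_simps fun_eq_iff)
  interpret P: finite_dimensional_vector_space_pair_1 "scalev :: 'k \<Rightarrow> ('n \<Rightarrow> 'k) \<Rightarrow> ('n \<Rightarrow> 'k)" "range unitv"
      "scalemap :: 'k \<Rightarrow> (('n \<Rightarrow> 'k) \<Rightarrow> ('n \<times> 'n \<Rightarrow> 'k)) \<Rightarrow> (('n \<Rightarrow> 'k) \<Rightarrow> ('n \<times> 'n \<Rightarrow> 'k))"
    using vs1 vs2 by (simp add: finite_dimensional_vector_space_pair_1_def)
  have lin: "Vector_Spaces.linear scalev scalemap F.Dl"
  proof (intro Vector_Spaces.linear_iff[THEN iffD2] conjI allI vs_scalev vs2)
    fix x y show "F.Dl (x + y) = F.Dl x + F.Dl y" by (rule F.Dl_add)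
  next
    fix c x show "F.Dl (scalev c x) = scalemap c (F.Dl x)" by (rule F.Dl_scal)
  qed
  have "P.vs2.dim (F.Dl ` UNIV) = P.vs1.dim UNIV"
    by (rule P.dim_image_eq[OF lin]) (rule inj_on_subset[OF F.Dl_inj], simp)
  then show ?thesis unfolding frobdim_def F.Dl_image by simp
qed

end
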